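(* Let $Q=\mathrm{diag}(q_1,\dots,q_n)$ with $q_i>0$, $C(u)=\frac12u^TQu$, $P^l\in\mathbb{R}^n$, and suppose there exist $\overline\eta\in\mathcal{R}(D^T)$, $\overline V\in\mathbb{R}^n_{>0}$ and $\overline E_{fd}\in\mathbb{R}^n$ with \[ \Big(Q^{-1}\frac{\mathbf{1}_n\mathbf{1}_n^T}{\mathbf{1}_n^TQ^{-1}\mathbf{1}_n}-I_n\Big)P^l=D\Gamma(\overline V)\boldsymbol{\sin}(\overline\eta),\qquad \mathbf{0}=-E(\overline\eta)\overline V+\overline E_{fd}. \] Then the (unique) minimizer $\overline u$ of $\min_u C(u)$ subject to $\mathbf{1}_n^T(u-P^l)=0$ coincides with the $u$-component $\overline u'$ of a minimizer of \[ \min_{u,\eta}C(u)\quad\text{subject to}\quad \mathbf{0}=u-D\Gamma(\overline V)\boldsymbol{\sin}(\eta)-P^l,\ \ \eta\in\mathcal{R}(D^T). \]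
   Context: Standing setup (power network model). $\mathcal{G}=(\mathcal{V},\mathcal{E})$ is a connected undirected graph with node set $\{1,\dots,n\}$ and $m$ edges; each edge $k=\{i,j\}$ is given an arbitrary orientation, and $D\in\mathbb{R}^{n\times m}$ is the incidence matrix: $d_{ik}=+1$ if $i$ is the positive end of edge $k$, $-1$ if $i$ is the negative end, $0$ otherwise. $\mathbf{1}_n$ is the all-ones vector. For each edge $k=\{i,j\}$ there is a susceptance $B_{ij}=B_{ji}>0$; each node has a self-susceptance $B_{ii}<0$ with $|B_{ii}|>\sum_{j\in\mathcal{N}_i}|B_{ij}|$, and reactances $X_{di}>X'_{di}>0$. For $V\in\mathbb{R}^n$, $\Gamma(V)=\mathrm{diag}(\gamma_1,\dots,\gamma_m)$ with $\gamma_k=V_iV_jB_{ij}$ for edge $k=\{i,j\}$. For $\eta\in\mathbb{R}^m$, $E(\eta)\in\mathbb{R}^{n\times n}$ is the symmetric matrix with $E_{ii}=\frac{1-B_{ii}(X_{di}-X'_{di})}{X_{di}-X'_{di}}$, $E_{ij}=-B_{ij}\cos(\eta_k)$ if $k=\{i,j\}$ is an edge, and $E_{ij}=0$ otherwise. $\boldsymbol{\sin}$ acts componentwise. *)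

theory Defs
  imports "HOL-Analysis.Analysis"
begin

text \<open>Graph: nodes are the elements of a finite type 'n, edges the elements of a finite
  type 'm. Edge k is oriented from its positive end fst (ends k) to its negative end
  snd (ends k).\<close>

definition adjacent :: "('m \<Rightarrow> 'n \<times> 'n) \<Rightarrow> 'n \<Rightarrow> 'n \<Rightarrow> bool" where
  "adjacent ends i j \<longleftrightarrow> (\<exists>k. ends k = (i, j) \<or> ends k = (j, i))"

definition simple_graph :: "('m \<Rightarrow> 'n \<times> 'n) \<Rightarrow> bool" where
  "simple_graph ends \<longleftrightarrow>
     (\<forall>k. fst (ends k) \<noteq> snd (ends k)) \<and>
     (\<forall>k l. {fst (ends k), snd (ends k)} = {fst (ends l), snd (ends l)} \<longrightarrow> k = l)"

definition connected_graph :: "('m \<Rightarrow> 'n \<times> 'n) \<Rightarrow> bool" where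
  "connected_graph ends \<longleftrightarrow> (\<forall>i j. (adjacent ends)\<^sup>*\<^sup>* i j)"

definition neighbours :: "('m \<Rightarrow> 'n \<times> 'n) \<Rightarrow> 'n \<Rightarrow> 'n set" where
  "neighbours ends i = {j. adjacent ends i j}"

definition incidence :: "('m::finite \<Rightarrow> 'n::finite \<times> 'n) \<Rightarrow> real^'m^'n" where
  "incidence ends = (\<chi> i k. if i = fst (ends k) then 1 else if i = snd (ends k) then -1 else 0)"

definition Gam :: "('m::finite \<Rightarrow> 'n::finite \<times> 'n) \<Rightarrow> ('n \<Rightarrow> 'n \<Rightarrow> real) \<Rightarrow> real^'n \<Rightarrow> real^'m^'m" where
  "Gam ends B V = (\<chi> k l. if k = l then V $ fst (ends k) * V $ snd (ends k) * B (fst (ends k)) (snd (ends k)) else 0)"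

definition Emat :: "('m::finite \<Rightarrow> 'n::finite \<times> 'n) \<Rightarrow> ('n \<Rightarrow> 'n \<Rightarrow> real) \<Rightarrow> ('n \<Rightarrow> real) \<Rightarrow> ('n \<Rightarrow> real)
     \<Rightarrow> real^'m \<Rightarrow> real^'n^'n" where
  "Emat ends B Xd Xdp eta = (\<chi> i j.
     if i = j then (1 - B i i * (Xd i - Xdp i)) / (Xd i - Xdp i)
     else if adjacent ends i j
       then - B i j * cos (eta $ (THE k. ends k = (i, j) \<or> ends k = (j, i)))
       else 0)"

definition sinv :: "real^'m \<Rightarrow> real^'m" where
  "sinv eta = (\<chi> k. sin (eta $ k))"

definition diagm :: "real^'n \<Rightarrow> real^'n^'n" where
  "diagm q = (\<chi> i j. if i = j then q $ i else 0)"

definition cost :: "real^'n^'n \<Rightarrow> real^'n \<Rightarrow> real" where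
  "cost Q u = (1/2) * (u \<bullet> (Q *v u))"

end

theory Submission
  imports Defs
begin

lemma diag_mul: "diagm (a::real^'n) ** diagm b = diagm (\<chi> i. a$i * b$i)"
proof -
  have "\<And>i j. (\<Sum>k\<in>UNIV. (if i = k then a$i else 0) * (if k = j then b$k else 0))
     = (if i = j then a$i * b$i else 0)"
  proof -
    fix i j :: 'n
    have "(\<Sum>k\<in>UNIV. (if i = k then a$i else 0) * (if k = j then b$k else 0))
        = (\<Sum>k\<in>UNIV. if k = i then (if i = j then a$i * b$i else 0) else 0)"
      by (intro sum.cong) auto
    thus "?thesis i j" by simp
  qed
  thus ?thesis by (simp add: diagm_def matrix_matrix_mult_def vec_eq_iff)
qed

lemma minv_diag:
  fixes q :: "real^'n"
  assumes "\<And>i. q$i \<noteq> 0"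
  shows "matrix_inv (diagm q) = diagm (\<chi> i. 1 / q$i)"
proof -
  let ?R = "diagm (\<chi> i. 1 / q$i)"
  have m1: "diagm q ** ?R = mat 1" "?R ** diagm q = mat 1"
    using assms by (simp_all add: diag_mul, simp_all add: diagm_def mat_def vec_eq_iff)
  hence "\<exists>A'. diagm q ** A' = mat 1 \<and> A' ** diagm q = mat 1" by blast
  hence s: "diagm q ** matrix_inv (diagm q) = mat 1 \<and> matrix_inv (diagm q) ** diagm q = mat 1"
    unfolding matrix_inv_def by (rule someI_ex)
  have "matrix_inv (diagm q) = matrix_inv (diagm q) ** (diagm q ** ?R)" using m1 by simp
  also have "\<dots> = ?R" using s by (simp add: matrix_mul_assoc)
  finally show ?thesis .
qed

lemma one_inner: "vec 1 \<bullet> (x::real^'n) = (\<Sum>i\<in>UNIV. x$i)"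
  by (simp add: inner_vec_def)

lemma cost_eq: "cost (diagm q) (u::real^'n) = (1/2) * (\<Sum>i\<in>UNIV. q$i * (u$i)^2)"
proof -
  have "\<And>i. (diagm q *v u) $ i = q$i * u$i"
  proof -
    fix i
    have "(\<Sum>j\<in>UNIV. (if i = j then q$i else 0) * u$j) = (\<Sum>j\<in>UNIV. if j = i then q$i * u$i else 0)"
      by (intro sum.cong) auto
    thus "(diagm q *v u) $ i = q$i * u$i" by (simp add: matrix_vector_mult_def diagm_def)
  qed
  thus ?thesis unfolding cost_def inner_vec_def by (simp add: power2_eq_square mult_ac)
qed

lemma colsum:
  assumes "simple_graph ends"
  shows "vec 1 \<bullet> (incidence ends *v y) = 0"
proof -
  have "vec 1 \<bullet> (incidence ends *v y) = (\<Sum>i\<in>UNIV. \<Sum>k\<in>UNIV. (if i = fst (ends k) then 1 else if i = snd (ends k) then -1 else 0) * y$k)"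
    unfolding one_inner by (simp add: incidence_def matrix_vector_mult_def)
  also have "\<dots> = (\<Sum>k\<in>UNIV. \<Sum>i\<in>UNIV. (if i = fst (ends k) then 1 else if i = snd (ends k) then -1 else 0) * y$k)"
    by (rule sum.swap)
  also have "\<dots> = 0"
  proof (rule sum.neutral, rule ballI)
    fix k
    have ne: "fst (ends k) \<noteq> snd (ends k)" using assms by (simp add: simple_graph_def)
    have "(\<Sum>i\<in>UNIV. (if i = fst (ends k) then 1 else if i = snd (ends k) then -1 else 0) * y$k)
       = (\<Sum>i\<in>UNIV. (if i = fst (ends k) then y$k else 0) + (if i = snd (ends k) then - y$k else 0))"
      using ne by (intro sum.cong) auto
    also have "\<dots> = 0" by (simp add: sum.distrib)
    finally show "(\<Sum>i\<in>UNIV. (if i = fst (ends k) then 1 else if i = snd (ends k) then -1 else 0) * y$k) = 0" .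
  qed
  finally show ?thesis .
qed

lemma quad:
  fixes q u w :: "real^'n"
  assumes "\<And>i. q$i * w$i = c" and "(\<Sum>i\<in>UNIV. u$i) = (\<Sum>i\<in>UNIV. w$i)"
  shows "cost (diagm q) u = cost (diagm q) w + (1/2) * (\<Sum>i\<in>UNIV. q$i * (u$i - w$i)^2)"
proof -
  have "(\<Sum>i\<in>UNIV. q$i * (u$i)^2) = (\<Sum>i\<in>UNIV. q$i * (u$i - w$i)^2 + 2 * (q$i * w$i) * u$i - (q$i * w$i) * w$i)"
    by (intro sum.cong) (auto simp: power2_eq_square algebra_simps)
  also have "\<dots> = (\<Sum>i\<in>UNIV. q$i * (u$i - w$i)^2) + 2 * c * (\<Sum>i\<in>UNIV. u$i) - c * (\<Sum>i\<in>UNIV. w$i)"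
    by (simp add: assms(1) sum.distrib sum_subtractf sum_distrib_left)
  also have "(\<Sum>i\<in>UNIV. q$i * (w$i)^2) = c * (\<Sum>i\<in>UNIV. w$i)"
    by (simp add: power2_eq_square sum_distrib_left mult.assoc[symmetric] assms(1))
  ultimately show ?thesis using assms(2) by (simp add: cost_eq algebra_simps)
qed

theorem lemma4:
  fixes ends :: "'m::finite \<Rightarrow> 'n::finite \<times> 'n"
    and B :: "'n \<Rightarrow> 'n \<Rightarrow> real"
    and Xd Xdp :: "'n \<Rightarrow> real"
    and q Pl Vbar Efd ubar :: "real^'n"
    and etabar :: "real^'m"
  assumes simple: "simple_graph ends"
    and conn: "connected_graph ends"
    and B_sym: "\<And>i j. B i j = B j i"
    and B_pos: "\<And>i j. adjacent ends i j \<Longrightarrow> B i j > 0"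
    and B_self: "\<And>i. B i i < 0"
    and B_dom: "\<And>i. \<bar>B i i\<bar> > (\<Sum>j\<in>neighbours ends i. \<bar>B i j\<bar>)"
    and X_pos: "\<And>i. 0 < Xdp i" "\<And>i. Xdp i < Xd i"
    and q_pos: "\<And>i. q $ i > 0"
    and eta_range: "etabar \<in> range (\<lambda>x. transpose (incidence ends) *v x)"
    and V_pos: "\<And>i. Vbar $ i > 0"
    and eq1: "((inverse (vec 1 \<bullet> (matrix_inv (diagm q) *v vec 1))) *\<^sub>R
                 (matrix_inv (diagm q) ** (\<chi> i j. 1)) - mat 1) *v Pl
              = incidence ends *v (Gam ends B Vbar *v sinv etabar)"
    and eq2: "0 = - (Emat ends B Xd Xdp etabar *v Vbar) + Efd"
    and ubar_min: "vec 1 \<bullet> (ubar - Pl) = 0"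
                  "\<And>u. vec 1 \<bullet> (u - Pl) = 0 \<Longrightarrow> cost (diagm q) ubar \<le> cost (diagm q) u"
  shows "(\<exists>eta. ubar - incidence ends *v (Gam ends B Vbar *v sinv eta) - Pl = 0
              \<and> eta \<in> range (\<lambda>x. transpose (incidence ends) *v x)
              \<and> (\<forall>u' eta'. u' - incidence ends *v (Gam ends B Vbar *v sinv eta') - Pl = 0
                    \<and> eta' \<in> range (\<lambda>x. transpose (incidence ends) *v x)
                    \<longrightarrow> cost (diagm q) ubar \<le> cost (diagm q) u'))
       \<and> (\<forall>u eta. (u - incidence ends *v (Gam ends B Vbar *v sinv eta) - Pl = 0
                    \<and> eta \<in> range (\<lambda>x. transpose (incidence ends) *v x)
                    \<and> (\<forall>u' eta'. u' - incidence ends *v (Gam ends B Vbar *v sinv eta') - Pl = 0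
                          \<and> eta' \<in> range (\<lambda>x. transpose (incidence ends) *v x)
                          \<longrightarrow> cost (diagm q) u \<le> cost (diagm q) u'))
                  \<longrightarrow> u = ubar)"
proof -
  let ?D = "incidence ends" and ?G = "Gam ends B Vbar"
  define r :: "real^'n" where "r = (\<chi> i. 1 / q$i)"
  define s where "s = (\<Sum>i\<in>UNIV. r$i)"
  define c where "c = (\<Sum>i\<in>UNIV. Pl$i) / s"
  define w where "w = ?D *v (?G *v sinv etabar) + Pl"
  have qne: "\<And>i. q$i \<noteq> 0" using q_pos by (metis less_irrefl)
  have mi: "matrix_inv (diagm q) = diagm r" unfolding r_def by (rule minv_diag[OF qne])
  have dv: "\<And>u i. (diagm r *v u) $ i = r$i * u$i"
  proof -
    fix u :: "real^'n" and i
    have "(\<Sum>j\<in>UNIV. (if i = j then r$i else 0) * u$j) = (\<Sum>j\<in>UNIV. if j = i then r$i * u$i else 0)"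
      by (intro sum.cong) auto
    thus "(diagm r *v u) $ i = r$i * u$i" by (simp add: matrix_vector_mult_def diagm_def)
  qed
  have sv: "vec 1 \<bullet> (diagm r *v vec 1) = s"
    unfolding one_inner s_def by (simp add: dv)
  have dj: "diagm r ** (\<chi> i j. 1) = (\<chi> i j. r$i)"
  proof -
    have "\<And>i. (\<Sum>k\<in>UNIV. (if i = k then r$i else 0)) = r$i"
    proof -
      fix i
      have "(\<Sum>k\<in>UNIV. (if i = k then r$i else 0)) = (\<Sum>k\<in>UNIV. if k = i then r$i else 0)"
        by (intro sum.cong) auto
      thus "?thesis i" by simp
    qed
    thus ?thesis by (simp add: matrix_matrix_mult_def diagm_def vec_eq_iff)
  qed
  have lhs: "\<And>i. (((inverse s) *\<^sub>R (\<chi> i j. r$i) - mat 1) *v Pl) $ i = inverse s * r$i * (\<Sum>j\<in>UNIV. Pl$j) - Pl$i"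
  proof -
    fix i
    have "(\<Sum>j\<in>UNIV. (inverse s * r$i - (if i = j then 1 else 0)) * Pl$j)
        = (\<Sum>j\<in>UNIV. inverse s * r$i * Pl$j - (if j = i then Pl$i else 0))"
      by (intro sum.cong) (auto simp: algebra_simps)
    also have "\<dots> = inverse s * r$i * (\<Sum>j\<in>UNIV. Pl$j) - Pl$i"
      by (simp add: sum_subtractf sum_distrib_left)
    finally show "?thesis i" by (simp add: matrix_vector_mult_def mat_def)
  qed
  have spos: "s > 0" unfolding s_def r_def
    by (intro sum_pos) (auto simp: q_pos)
  have e1: "((inverse s) *\<^sub>R (\<chi> i j. r$i) - mat 1) *v Pl = ?D *v (?G *v sinv etabar)"
    using eq1 unfolding mi sv dj .
  have wi: "\<And>i. q$i * w$i = c"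
  proof -
    fix i
    have "w$i = (?D *v (?G *v sinv etabar))$i + Pl$i" by (simp add: w_def)
    also have "\<dots> = inverse s * r$i * (\<Sum>j\<in>UNIV. Pl$j)"
      using e1[symmetric] lhs[of i] by simp
    finally show "q$i * w$i = c" using qne[of i] by (simp add: c_def r_def field_simps)
  qed
  have H: "\<And>u eta. u - ?D *v (?G *v sinv eta) - Pl = 0 \<Longrightarrow> vec 1 \<bullet> (u - Pl) = 0"
  proof -
    fix u eta
    assume "u - ?D *v (?G *v sinv eta) - Pl = 0"
    hence "u - Pl = ?D *v (?G *v sinv eta)" by (simp add: algebra_simps)
    thus "vec 1 \<bullet> (u - Pl) = 0" using colsum[OF simple] by simp
  qed
  have Hs: "\<And>u. vec 1 \<bullet> (u - Pl) = 0 \<Longrightarrow> (\<Sum>i\<in>UNIV. u$i) = (\<Sum>i\<in>UNIV. Pl$i)"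
    unfolding one_inner by (simp add: sum_subtractf)
  have wH: "vec 1 \<bullet> (w - Pl) = 0" by (rule H[of w etabar]) (simp add: w_def)
  have uniq: "\<And>u. vec 1 \<bullet> (u - Pl) = 0 \<Longrightarrow> cost (diagm q) u \<le> cost (diagm q) w \<Longrightarrow> u = w"
  proof -
    fix u
    assume a: "vec 1 \<bullet> (u - Pl) = 0" "cost (diagm q) u \<le> cost (diagm q) w"
    have "cost (diagm q) u = cost (diagm q) w + (1/2) * (\<Sum>i\<in>UNIV. q$i * (u$i - w$i)^2)"
      by (rule quad[OF wi]) (simp add: Hs[OF a(1)] Hs[OF wH])
    with a(2) have le: "(\<Sum>i\<in>UNIV. q$i * (u$i - w$i)^2) \<le> 0" by simp
    have nn: "\<And>i. 0 \<le> q$i * (u$i - w$i)^2" using q_pos by (simp add: less_imp_le)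
    have "(\<Sum>i\<in>UNIV. q$i * (u$i - w$i)^2) = 0" using le sum_nonneg[of UNIV "\<lambda>i. q$i * (u$i - w$i)^2", OF nn] by linarith
    hence "\<forall>i\<in>UNIV. q$i * (u$i - w$i)^2 = 0" using nn by (simp add: sum_nonneg_eq_0_iff)
    thus "u = w" using qne by (simp add: vec_eq_iff)
  qed
  have ubw: "ubar = w" by (rule uniq[OF ubar_min(1) ubar_min(2)[OF wH]])
  have p1: "ubar - ?D *v (?G *v sinv etabar) - Pl = 0" by (simp add: ubw w_def)
  have p2: "\<forall>u' eta'. u' - ?D *v (?G *v sinv eta') - Pl = 0 \<and> eta' \<in> range (\<lambda>x. transpose (incidence ends) *v x)
          \<longrightarrow> cost (diagm q) ubar \<le> cost (diagm q) u'"
    using H ubar_min(2) by blast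
  have p3: "u = ubar" if a: "u - ?D *v (?G *v sinv eta) - Pl = 0 \<and> eta \<in> range (\<lambda>x. transpose (incidence ends) *v x)
          \<and> (\<forall>u' eta'. u' - ?D *v (?G *v sinv eta') - Pl = 0 \<and> eta' \<in> range (\<lambda>x. transpose (incidence ends) *v x)
                \<longrightarrow> cost (diagm q) u \<le> cost (diagm q) u')" for u eta
  proof -
    have "cost (diagm q) u \<le> cost (diagm q) ubar"
      using a p1 eta_range by blast
    moreover have "vec 1 \<bullet> (u - Pl) = 0" using H a by blast
    ultimately show "u = ubar" using uniq ubw by simp
  qed
  show ?thesis using p1 p2 p3 eta_range by blast
qed

end
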